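(* $\operatorname{Sort} \equiv_{\mathrm{sW}} \min^-_{\omega+1}$.
   Context: Represented spaces: a representation of a set $X$ is a partial surjection $\delta_X:\subseteq\mathbb{N}^\mathbb{N}\to X$. For a partial multi-valued function $f:\subseteq X\rightrightarrows Y$ between represented spaces, a realizer is a partial $F:\subseteq\mathbb{N}^\mathbb{N}\to\mathbb{N}^\mathbb{N}$ with $\delta_Y(F(p))\in f(\delta_X(p))$ for all $p$ with $\delta_X(p)\in\mathrm{dom}(f)$. Strong Weihrauch reducibility: $f\le_{\mathrm{sW}} g$ iff there are computable partial $H,K:\subseteq\mathbb{N}^\mathbb{N}\to\mathbb{N}^\mathbb{N}$ such that $H\circ G\circ K$ is a realizer of $f$ for every realizer $G$ of $g$; $\equiv_{\mathrm{sW}}$ denotes reducibility in both directions. $\operatorname{Sort}:2^\mathbb{N}\to 2^\mathbb{N}$ is defined by $\operatorname{Sort}(p)=0^n1^\mathbb{N}$ if $p$ contains exactly $n$ occurrences of $0$, and $\operatorname{Sort}(p)=0^\mathbb{N}$ if $p$ contains infinitely many occurrences of $0$. $\omega+1:=\{-2^{-n}:n\in\mathbb{N}\}\cup\{0\}\subseteq\mathbb{R}$, a computable metric space with the Euclidean metric and dense set $\omega+1$ itself; its points are represented by the Cauchy representation (effective Cauchy sequences from $\omega+1$, i.e. sequences $(a_i)$ with $|a_i-a_j|\le 2^{-i}$ for $j\ge i$). Closed subsets of $\omega+1$ are represented negatively ($\mathcal{A}_-(\omega+1)$): a name of a closed $A$ is an enumeration of basic open balls $B(a,q)$ (with $a\in\omega+1$,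 $q$ a nonnegative rational) whose union is $(\omega+1)\setminus A$. $\min^-_{\omega+1}:\subseteq\mathcal{A}_-(\omega+1)\to\omega+1$ maps each nonempty closed $A$ to $\min A$ (with respect to the usual order of $\mathbb{R}$). *)

theory Defs
  imports Complex_Main "HOL-Library.Nat_Bijection"
begin

inductive recfn :: "nat \<Rightarrow> (nat list \<Rightarrow> nat) \<Rightarrow> bool" where
  zero: "recfn n (\<lambda>_. 0)"
| succ: "recfn 1 (\<lambda>xs. Suc (hd xs))"
| proj: "i < n \<Longrightarrow> recfn n (\<lambda>xs. xs ! i)"
| comp: "recfn m f \<Longrightarrow> length gs = m \<Longrightarrow> (\<forall>g\<in>set gs. recfn n g) \<Longrightarrow>
           recfn n (\<lambda>xs. f (map (\<lambda>g. g xs) gs))"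
| prim: "recfn n f \<Longrightarrow> recfn (Suc (Suc n)) g \<Longrightarrow>
           recfn (Suc n) (\<lambda>xs. rec_nat (f (tl xs)) (\<lambda>k r. g (k # r # tl xs)) (hd xs))"
| mu: "recfn (Suc n) f \<Longrightarrow> (\<forall>xs. length xs = n \<longrightarrow> (\<exists>y. f (y # xs) = 0)) \<Longrightarrow>
           recfn n (\<lambda>xs. LEAST y. f (y # xs) = 0)"

definition total_recursive :: "(nat \<Rightarrow> nat) \<Rightarrow> bool" where
  "total_recursive h \<longleftrightarrow> (\<exists>f. recfn 1 f \<and> (\<forall>x. h x = f [x]))"

type_synonym baire = "nat \<Rightarrow> nat"

definition pref :: "baire \<Rightarrow> nat \<Rightarrow> nat list" where
  "pref p m = map p [0..<m]"

text \<open>A machine given by a total recursive function h on codes of finite words: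
  on input prefix w it has written the word list_decode (h (list_encode w)).
  "computes h p q": on input p the machine produces the infinite output q.
  The partial computable functions of Baire space are exactly the maps
  p \<mapsto> q given by such relations (restricted to the inputs where output is infinite).\<close>
definition machine_out :: "(nat \<Rightarrow> nat) \<Rightarrow> nat list \<Rightarrow> nat list" where
  "machine_out h w = list_decode (h (list_encode w))"

definition computes :: "(nat \<Rightarrow> nat) \<Rightarrow> baire \<Rightarrow> baire \<Rightarrow> bool" where
  "computes h p q \<longleftrightarrow>
     (\<forall>n. \<exists>m. n < length (machine_out h (pref p m))) \<and>
     (\<forall>m i. i < length (machine_out h (pref p m)) \<longrightarrow> machine_out h (pref p m) ! i = q i)"

record ('a, 'b) problem =
  in_rep  :: "baire \<Rightarrow> 'a option"
  out_rep :: "baire \<Rightarrow> 'b option"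
  pdom    :: "'a set"
  pmap    :: "'a \<Rightarrow> 'b set"

definition realizer :: "('a, 'b) problem \<Rightarrow> (baire \<Rightarrow> baire) \<Rightarrow> bool" where
  "realizer P G \<longleftrightarrow>
     (\<forall>p x. in_rep P p = Some x \<longrightarrow> x \<in> pdom P \<longrightarrow>
        (\<exists>y. out_rep P (G p) = Some y \<and> y \<in> pmap P x))"

definition sW_le :: "('a, 'b) problem \<Rightarrow> ('c, 'd) problem \<Rightarrow> bool" where
  "sW_le P Q \<longleftrightarrow>
     (\<exists>hK hH. total_recursive hK \<and> total_recursive hH \<and>
        (\<forall>G. realizer Q G \<longrightarrow>
           (\<forall>p x. in_rep P p = Some x \<longrightarrow> x \<in> pdom P \<longrightarrow>
              (\<exists>q r y. computes hK p q \<and> computes hH (G q) r \<and>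
                        out_rep P r = Some y \<and> y \<in> pmap P x))))"

definition sW_equiv :: "('a, 'b) problem \<Rightarrow> ('c, 'd) problem \<Rightarrow> bool" where
  "sW_equiv P Q \<longleftrightarrow> sW_le P Q \<and> sW_le Q P"

definition cantor_rep :: "baire \<Rightarrow> baire option" where
  "cantor_rep p = (if \<forall>n. p n \<le> 1 then Some p else None)"

definition Sort_fun :: "baire \<Rightarrow> baire" where
  "Sort_fun p = (if finite {i. p i = 0}
                 then (\<lambda>i. if i < card {i. p i = 0} then 0 else 1)
                 else (\<lambda>_. 0))"

definition Sort_problem :: "(baire, baire) problem" where
  "Sort_problem = \<lparr> in_rep = cantor_rep, out_rep = cantor_rep,
                    pdom = {p. \<forall>n. p n \<le> 1}, pmap = (\<lambda>p. {Sort_fun p}) \<rparr>"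

definition omega1 :: "real set" where
  "omega1 = {- ((1/2) ^ n) | n. True} \<union> {0}"

text \<open>Standard numbering of the dense set omega+1 itself.\<close>
definition nu :: "nat \<Rightarrow> real" where
  "nu k = (if k = 0 then 0 else - ((1/2) ^ (k - 1)))"

definition cauchy_rep :: "baire \<Rightarrow> real option" where
  "cauchy_rep p = (if (\<forall>i j. i \<le> j \<longrightarrow> \<bar>nu (p i) - nu (p j)\<bar> \<le> (1/2) ^ i)
                   then Some (lim (\<lambda>i. nu (p i))) else None)"

definition ball_code :: "nat \<Rightarrow> real set" where
  "ball_code n = (case prod_decode n of (k, m) \<Rightarrow> (case prod_decode m of (s, t) \<Rightarrow>
      {y \<in> omega1. \<bar>y - nu k\<bar> < real s / real (Suc t)}))"

definition closed_neg_rep :: "baire \<Rightarrow> real set option" where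
  "closed_neg_rep p = Some (omega1 - (\<Union>i. ball_code (p i)))"

definition min_problem :: "(real set, real) problem" where
  "min_problem = \<lparr> in_rep = closed_neg_rep, out_rep = cauchy_rep,
                   pdom = {A. A \<noteq> {}}, pmap = (\<lambda>A. {LEAST x. x \<in> A}) \<rparr>"

end

theory Submission
  imports Defs
begin

definition rn :: "nat \<Rightarrow> (nat list \<Rightarrow> nat) \<Rightarrow> bool" where
  "rn n f \<longleftrightarrow> (\<exists>g. recfn n g \<and> (\<forall>xs. length xs = n \<longrightarrow> f xs = g xs))"

lemma rn_cong: "rn n f \<Longrightarrow> (\<And>xs. length xs = n \<Longrightarrow> f xs = g xs) \<Longrightarrow> rn n g"
  unfolding rn_def by metis

lemma rn_recfn: "recfn n f \<Longrightarrow> rn n f"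
  unfolding rn_def by blast

lemma rn_comp:
  assumes "rn m f" "length gs = m" "\<forall>g\<in>set gs. rn n g"
  shows "rn n (\<lambda>xs. f (map (\<lambda>g. g xs) gs))"
proof -
  obtain f' where f': "recfn m f'" "\<forall>xs. length xs = m \<longrightarrow> f xs = f' xs"
    using assms(1) unfolding rn_def by blast
  have "\<forall>g\<in>set gs. \<exists>g'. recfn n g' \<and> (\<forall>xs. length xs = n \<longrightarrow> g xs = g' xs)"
    using assms(3) unfolding rn_def by blast
  then obtain \<phi> where phi: "\<forall>g\<in>set gs. recfn n (\<phi> g) \<and> (\<forall>xs. length xs = n \<longrightarrow> g xs = \<phi> g xs)"
    by metis
  have "recfn n (\<lambda>xs. f' (map (\<lambda>g. g xs) (map \<phi> gs)))"
    by (rule recfn.comp[OF f'(1)]) (use assms(2) phi in auto)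
  moreover have "\<forall>xs. length xs = n \<longrightarrow> f (map (\<lambda>g. g xs) gs) = f' (map (\<lambda>g. g xs) (map \<phi> gs))"
  proof (intro allI impI)
    fix xs :: "nat list" assume l: "length xs = n"
    have "map (\<lambda>g. g xs) gs = map (\<lambda>g. g xs) (map \<phi> gs)"
      using phi l by auto
    then show "f (map (\<lambda>g. g xs) gs) = f' (map (\<lambda>g. g xs) (map \<phi> gs))"
      using f'(2) assms(2) by (metis length_map)
  qed
  ultimately show ?thesis unfolding rn_def by blast
qed

lemma rn_proj: "i < n \<Longrightarrow> rn n (\<lambda>xs. xs ! i)"
  by (rule rn_recfn) (rule recfn.proj)

lemma rn_zero: "rn n (\<lambda>_. 0)"
  by (rule rn_recfn) (rule recfn.zero)

lemma rn_suc1: "rn 1 (\<lambda>xs. Suc (xs ! 0))"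
proof -
  have "rn 1 (\<lambda>xs. Suc (hd xs))" by (rule rn_recfn) (rule recfn.succ)
  then show ?thesis by (rule rn_cong) (auto simp: length_Suc_conv)
qed

lemma rn_comp1: "rn 1 f \<Longrightarrow> rn n a \<Longrightarrow> rn n (\<lambda>xs. f [a xs])"
  using rn_comp[of 1 f "[a]" n] by simp

lemma rn_comp2: "rn 2 f \<Longrightarrow> rn n a \<Longrightarrow> rn n b \<Longrightarrow> rn n (\<lambda>xs. f [a xs, b xs])"
  using rn_comp[of 2 f "[a,b]" n] by simp

lemma rn_comp3: "rn 3 f \<Longrightarrow> rn n a \<Longrightarrow> rn n b \<Longrightarrow> rn n c \<Longrightarrow> rn n (\<lambda>xs. f [a xs, b xs, c xs])"
  using rn_comp[of 3 f "[a,b,c]" n] by (simp add: numeral_3_eq_3)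

lemma rn_Suc: "rn n a \<Longrightarrow> rn n (\<lambda>xs. Suc (a xs))"
  using rn_comp1[OF rn_suc1, of n a] by simp

lemma rn_const: "rn n (\<lambda>_. c)"
  by (induct c) (auto intro: rn_zero dest: rn_Suc)

lemma map_nth_upt: "length xs = n \<Longrightarrow> map (\<lambda>i. xs ! i) [0..<n] = xs"
  by (metis map_nth)

lemma rn_prepend:
  assumes "rn (Suc n) f" "rn n a"
  shows "rn n (\<lambda>xs. f (a xs # xs))"
proof -
  let ?gs = "a # map (\<lambda>i xs. xs ! i) [0..<n]"
  have "rn n (\<lambda>xs. f (map (\<lambda>g. g xs) ?gs))"
    by (rule rn_comp[OF assms(1)]) (use assms(2) rn_proj in auto)
  then show ?thesis
    by (rule rn_cong) (simp add: comp_def map_nth_upt)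
qed

lemma rn_prepend2:
  assumes "rn (Suc (Suc n)) f" "rn n a" "rn n b"
  shows "rn n (\<lambda>xs. f (a xs # b xs # xs))"
proof -
  let ?gs = "a # b # map (\<lambda>i xs. xs ! i) [0..<n]"
  have "rn n (\<lambda>xs. f (map (\<lambda>g. g xs) ?gs))"
    by (rule rn_comp[OF assms(1)]) (use assms(2,3) rn_proj in auto)
  then show ?thesis
    by (rule rn_cong) (simp add: comp_def map_nth_upt)
qed

lemma rn_prim0:
  assumes "rn n f" "rn (Suc (Suc n)) g"
  shows "rn (Suc n) (\<lambda>xs. rec_nat (f (tl xs)) (\<lambda>k r. g (k # r # tl xs)) (hd xs))"
proof -
  obtain f' where f': "recfn n f'" "\<forall>xs. length xs = n \<longrightarrow> f xs = f' xs"
    using assms(1) unfolding rn_def by blast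
  obtain g' where g': "recfn (Suc (Suc n)) g'" "\<forall>xs. length xs = Suc (Suc n) \<longrightarrow> g xs = g' xs"
    using assms(2) unfolding rn_def by blast
  have "recfn (Suc n) (\<lambda>xs. rec_nat (f' (tl xs)) (\<lambda>k r. g' (k # r # tl xs)) (hd xs))"
    by (rule recfn.prim[OF f'(1) g'(1)])
  moreover have "\<forall>xs. length xs = Suc n \<longrightarrow> rec_nat (f (tl xs)) (\<lambda>k r. g (k # r # tl xs)) (hd xs)
     = rec_nat (f' (tl xs)) (\<lambda>k r. g' (k # r # tl xs)) (hd xs)"
    using f'(2) g'(2) by simp
  ultimately show ?thesis unfolding rn_def by blast
qed

lemma rn_prim:
  assumes "rn n f" "rn (Suc (Suc n)) g" "rn n a"
  shows "rn n (\<lambda>xs. rec_nat (f xs) (\<lambda>k r. g (k # r # xs)) (a xs))"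
  using rn_prepend[OF rn_prim0[OF assms(1,2)] assms(3)] by simp

lemma rn_mu:
  assumes "rn (Suc n) f" "\<And>xs. length xs = n \<Longrightarrow> \<exists>y. f (y # xs) = 0"
  shows "rn n (\<lambda>xs. LEAST y. f (y # xs) = 0)"
proof -
  obtain f' where f': "recfn (Suc n) f'" "\<forall>xs. length xs = Suc n \<longrightarrow> f xs = f' xs"
    using assms(1) unfolding rn_def by blast
  have ex: "\<forall>xs. length xs = n \<longrightarrow> (\<exists>y. f' (y # xs) = 0)"
    using assms(2) f'(2) by fastforce
  have "recfn n (\<lambda>xs. LEAST y. f' (y # xs) = 0)"
    by (rule recfn.mu[OF f'(1) ex])
  moreover have "\<forall>xs. length xs = n \<longrightarrow> (LEAST y. f (y # xs) = 0) = (LEAST y. f' (y # xs) = 0)"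
    using f'(2) by simp
  ultimately show ?thesis unfolding rn_def by blast
qed

lemma rn_tlproj: "i < n \<Longrightarrow> rn (Suc n) (\<lambda>xs. tl xs ! i)"
  by (rule rn_cong[OF rn_proj[of "Suc i"]]) (auto simp: nth_tl)

lemma rn_tl2proj: "i < n \<Longrightarrow> rn (Suc (Suc n)) (\<lambda>xs. tl (tl xs) ! i)"
  by (rule rn_cong[OF rn_proj[of "Suc (Suc i)"]]) (auto simp: nth_tl)

lemma total_recursive_rn: "rn 1 (\<lambda>xs. h (xs ! 0)) \<Longrightarrow> total_recursive h"
  unfolding rn_def total_recursive_def
  by (metis One_nat_def length_Cons list.size(3) nth_Cons_0)

lemma rn_shift: "rn n b \<Longrightarrow> rn (Suc n) (\<lambda>ys. b (tl ys))"
proof -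
  assume b: "rn n b"
  let ?gs = "map (\<lambda>i xs. xs ! Suc i) [0..<n]"
  have "rn (Suc n) (\<lambda>xs. b (map (\<lambda>g. g xs) ?gs))"
    by (rule rn_comp[OF b]) (auto intro: rn_proj)
  then show ?thesis
  proof (rule rn_cong)
    fix xs :: "nat list" assume "length xs = Suc n"
    then obtain y ys where "xs = y # ys" "length ys = n" by (metis length_Suc_conv)
    then show "b (map (\<lambda>g. g xs) ?gs) = b (tl xs)"
      by (simp add: comp_def map_nth_upt)
  qed
qed

lemma rn_shift2: "rn n b \<Longrightarrow> rn (Suc (Suc n)) (\<lambda>ys. b (tl (tl ys)))"
  using rn_shift[OF rn_shift] by blast

named_theorems rn_intros

lemma rec_nat_add: "rec_nat b (\<lambda>k r. Suc r) a = a + (b::nat)"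
  by (induct a) auto

lemma rn_add[rn_intros]: "rn n a \<Longrightarrow> rn n b \<Longrightarrow> rn n (\<lambda>xs. a xs + b xs)"
proof -
  assume a: "rn n a" and b: "rn n b"
  have "rn n (\<lambda>xs. rec_nat (b xs) (\<lambda>k r. (\<lambda>ys. Suc (ys ! 1)) (k # r # xs)) (a xs))"
    by (rule rn_prim[OF b _ a]) (intro rn_Suc rn_proj, simp)
  then show ?thesis by (simp add: rec_nat_add)
qed

lemma rec_nat_pred: "rec_nat 0 (\<lambda>k r. k) a = a - (1::nat)"
  by (induct a) auto

lemma rn_pred: "rn n a \<Longrightarrow> rn n (\<lambda>xs. a xs - 1)"
proof -
  assume a: "rn n a"
  have "rn n (\<lambda>xs. rec_nat ((\<lambda>_. 0) xs) (\<lambda>k r. (\<lambda>ys. ys ! 0) (k # r # xs)) (a xs))"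
    by (rule rn_prim[OF rn_zero _ a]) (rule rn_proj, simp)
  then show ?thesis by (simp add: rec_nat_pred)
qed

lemma rec_nat_minus: "rec_nat a (\<lambda>k r. r - Suc 0) b = a - (b::nat)"
  by (induct b) auto

lemma rn_minus[rn_intros]: "rn n a \<Longrightarrow> rn n b \<Longrightarrow> rn n (\<lambda>xs. a xs - b xs)"
proof -
  assume a: "rn n a" and b: "rn n b"
  have "rn n (\<lambda>xs. rec_nat (a xs) (\<lambda>k r. (\<lambda>ys. ys ! 1 - 1) (k # r # xs)) (b xs))"
    by (rule rn_prim[OF a _ b]) (intro rn_pred rn_proj, simp)
  then show ?thesis by (simp add: rec_nat_minus)
qed

lemma rec_nat_mult: "rec_nat 0 (\<lambda>k r. r + b) a = a * (b::nat)"
  by (induct a) auto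

lemma rn_mult[rn_intros]: "rn n a \<Longrightarrow> rn n b \<Longrightarrow> rn n (\<lambda>xs. a xs * b xs)"
proof -
  assume a: "rn n a" and b: "rn n b"
  have "rn n (\<lambda>xs. rec_nat ((\<lambda>_. 0) xs) (\<lambda>k r. (\<lambda>ys. ys ! 1 + b (tl (tl ys))) (k # r # xs)) (a xs))"
    by (rule rn_prim[OF rn_zero _ a]) (intro rn_add rn_proj rn_shift2 b, simp)
  then show ?thesis by (simp add: rec_nat_mult)
qed

lemma rec_nat_case: "rec_nat b (\<lambda>k r. c) a = (case a of 0 \<Rightarrow> b | Suc _ \<Rightarrow> (c::nat))"
  by (cases a) auto

lemma rn_case: "rn n a \<Longrightarrow> rn n b \<Longrightarrow> rn n c \<Longrightarrow> rn n (\<lambda>xs. case a xs of 0 \<Rightarrow> b xs | Suc _ \<Rightarrow> c xs)"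
proof -
  assume a: "rn n a" and b: "rn n b" and c: "rn n c"
  have "rn n (\<lambda>xs. rec_nat (b xs) (\<lambda>k r. (\<lambda>ys. c (tl (tl ys))) (k # r # xs)) (a xs))"
    by (rule rn_prim[OF b _ a]) (intro rn_shift2 c)
  then show ?thesis by (simp add: rec_nat_case)
qed

lemma rn_if_le[rn_intros]: "rn n a \<Longrightarrow> rn n b \<Longrightarrow> rn n c \<Longrightarrow> rn n d \<Longrightarrow>
   rn n (\<lambda>xs. if a xs \<le> b xs then c xs else d xs)"
proof -
  assume a: "rn n a" and b: "rn n b" and c: "rn n c" and d: "rn n d"
  have "rn n (\<lambda>xs. case a xs - b xs of 0 \<Rightarrow> c xs | Suc _ \<Rightarrow> d xs)"
    by (intro rn_case rn_minus a b c d)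
  then show ?thesis by (rule rn_cong) (auto split: nat.split)
qed

lemma rn_if_less[rn_intros]: "rn n a \<Longrightarrow> rn n b \<Longrightarrow> rn n c \<Longrightarrow> rn n d \<Longrightarrow>
   rn n (\<lambda>xs. if a xs < b xs then c xs else d xs)"
proof -
  assume a: "rn n a" and b: "rn n b" and c: "rn n c" and d: "rn n d"
  have "rn n (\<lambda>xs. if b xs \<le> a xs then d xs else c xs)"
    by (intro rn_if_le a b c d)
  then show ?thesis by (rule rn_cong) auto
qed

lemma rn_if_eq[rn_intros]: "rn n a \<Longrightarrow> rn n b \<Longrightarrow> rn n c \<Longrightarrow> rn n d \<Longrightarrow>
   rn n (\<lambda>xs. if a xs = b xs then c xs else d xs)"
proof -
  assume a: "rn n a" and b: "rn n b" and c: "rn n c" and d: "rn n d"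
  have "rn n (\<lambda>xs. if a xs \<le> b xs then (if b xs \<le> a xs then c xs else d xs) else d xs)"
    by (intro rn_if_le a b c d)
  then show ?thesis by (rule rn_cong) auto
qed

lemma rn_if_and[rn_intros]: "rn n (\<lambda>xs. if P xs then (if Q xs then c xs else d xs) else d xs) \<Longrightarrow>
   rn n (\<lambda>xs. if P xs \<and> Q xs then c xs else d xs)"
  by (erule rn_cong) auto

lemma rn_if_not[rn_intros]: "rn n (\<lambda>xs. if P xs then d xs else c xs) \<Longrightarrow>
   rn n (\<lambda>xs. if \<not> P xs then c xs else d xs)"
  by (erule rn_cong) auto

lemma rn_Suc'[rn_intros]: "rn n a \<Longrightarrow> rn n (\<lambda>xs. Suc (a xs))" by (rule rn_Suc)
lemma rn_const'[rn_intros]: "rn n (\<lambda>_. c)" by (rule rn_const)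
lemma rn_proj'[rn_intros]: "i < n \<Longrightarrow> rn n (\<lambda>xs. xs ! i)" by (rule rn_proj)
lemma rn_tlproj'[rn_intros]: "i < n \<Longrightarrow> rn (Suc n) (\<lambda>xs. tl xs ! i)" by (rule rn_tlproj)
lemma rn_tl2proj'[rn_intros]: "i < n \<Longrightarrow> rn (Suc (Suc n)) (\<lambda>xs. tl (tl xs) ! i)" by (rule rn_tl2proj)

lemma rec_nat_tri: "rec_nat 0 (\<lambda>k r. Suc (r + k)) a = triangle a"
  by (induct a) auto

lemma rn_triangle[rn_intros]: "rn n a \<Longrightarrow> rn n (\<lambda>xs. triangle (a xs))"
proof -
  assume a: "rn n a"
  have "rn n (\<lambda>xs. rec_nat ((\<lambda>_. 0) xs) (\<lambda>k r. (\<lambda>ys. ys ! 1 + Suc (ys ! 0)) (k # r # xs)) (a xs))"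
    by (rule rn_prim[OF rn_zero _ a]) (intro rn_intros; simp)
  then show ?thesis by (simp add: rec_nat_tri)
qed

lemma rec_nat_pow: "rec_nat (Suc 0) (\<lambda>k r. r + r) a = (2::nat) ^ a"
  by (induct a) auto

lemma rn_pow2[rn_intros]: "rn n a \<Longrightarrow> rn n (\<lambda>xs. 2 ^ (a xs))"
proof -
  assume a: "rn n a"
  have "rn n (\<lambda>xs. rec_nat ((\<lambda>_. 1) xs) (\<lambda>k r. (\<lambda>ys. ys ! 1 + ys ! 1) (k # r # xs)) (a xs))"
    by (rule rn_prim[OF rn_const _ a]) (intro rn_intros; simp)
  then show ?thesis by (simp add: rec_nat_pow)
qed

lemma rn_penc[rn_intros]: "rn n a \<Longrightarrow> rn n b \<Longrightarrow> rn n (\<lambda>xs. prod_encode (a xs, b xs))"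
proof -
  assume a: "rn n a" and b: "rn n b"
  have "rn n (\<lambda>xs. triangle (a xs + b xs) + a xs)" by (intro rn_intros a b)
  then show ?thesis by (simp add: prod_encode_def)
qed


lemma rn_tl3proj[rn_intros]: "i < n \<Longrightarrow> rn (Suc (Suc (Suc n))) (\<lambda>xs. tl (tl (tl xs)) ! i)"
  by (rule rn_cong[OF rn_proj[of "Suc (Suc (Suc i))"]]) (auto simp: nth_tl)

lemma rn_hdproj[rn_intros]: "rn (Suc n) (\<lambda>xs. xs ! 0)"
  by (rule rn_proj) simp

lemma rn_prim_expr[rn_intros]:
  assumes "rn n a" "rn n f" "rn (Suc (Suc n)) (\<lambda>ys. G (ys ! 0) (ys ! 1) (tl (tl ys)))"
  shows "rn n (\<lambda>xs. rec_nat (f xs) (\<lambda>k r. G k r xs) (a xs))"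
  using rn_prim[OF assms(2,3,1)] by simp

lemma rn_mu_expr:
  assumes "rn (Suc n) (\<lambda>ys. F (ys ! 0) (tl ys))" "\<And>xs. length xs = n \<Longrightarrow> \<exists>y. F y xs = 0"
  shows "rn n (\<lambda>xs. LEAST y. F y xs = 0)"
  using rn_mu[OF assms(1)] assms(2) by simp

lemma sum_rec_nat: "(\<Sum>t<b. f t) = rec_nat 0 (\<lambda>k r. r + f k) (b::nat)"
  by (induct b) auto

lemma rn_sum_expr[rn_intros]:
  assumes "rn (Suc n) (\<lambda>ys. E (ys ! 0) (tl ys))" "rn n b"
  shows "rn n (\<lambda>xs. \<Sum>t<b xs. (E t xs :: nat))"
proof -
  have g: "rn (Suc (Suc n)) (\<lambda>ys. ys ! 1 + E (ys ! 0) (tl (tl ys)))"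
  proof (rule rn_add[OF rn_proj])
    let ?gs = "(\<lambda>ys. ys ! 0) # map (\<lambda>i ys. ys ! Suc (Suc i)) [0..<n]"
    have "rn (Suc (Suc n)) (\<lambda>zs. (\<lambda>ys. E (ys ! 0) (tl ys)) (map (\<lambda>g. g zs) ?gs))"
      by (rule rn_comp[OF assms(1)]) (auto intro: rn_proj)
    then show "rn (Suc (Suc n)) (\<lambda>ys. E (ys ! 0) (tl (tl ys)))"
    proof (rule rn_cong)
      fix xs :: "nat list" assume "length xs = Suc (Suc n)"
      then obtain y z ys where "xs = y # z # ys" "length ys = n" by (metis length_Suc_conv)
      then show "(\<lambda>ys. E (ys ! 0) (tl ys)) (map (\<lambda>g. g xs) ?gs) = E (xs ! 0) (tl (tl xs))"
        by (simp add: comp_def map_nth_upt)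
    qed
  qed simp
  have "rn n (\<lambda>xs. rec_nat ((\<lambda>_. 0) xs) (\<lambda>k r. (\<lambda>ys. ys ! 1 + E (ys ! 0) (tl (tl ys))) (k # r # xs)) (b xs))"
    by (rule rn_prim[OF rn_zero g assms(2)])
  then show ?thesis by (simp add: sum_rec_nat)
qed

lemma prod_decode_alt:
  fixes m :: nat
  defines "s \<equiv> LEAST s. m < triangle (Suc s)"
  shows "prod_decode m = (m - triangle s, s - (m - triangle s))"
proof -
  have ex: "m < triangle (Suc m)" by (induct m) auto
  have s1: "m < triangle (Suc s)" unfolding s_def by (rule LeastI[of "\<lambda>s. m < triangle (Suc s)", OF ex])
  have s2: "triangle s \<le> m"
  proof (cases s)
    case 0 then show ?thesis by simp
  next
    case (Suc s')
    have "\<not> m < triangle (Suc s')" using Suc s_def not_less_Least[of s' "\<lambda>s. m < triangle (Suc s)"] by simp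
    then show ?thesis using Suc by simp
  qed
  have "prod_encode (m - triangle s, s - (m - triangle s)) = m"
    using s1 s2 by (simp add: prod_encode_def)
  then show ?thesis by (metis prod_encode_inverse)
qed

lemma rn_trinv: "rn n a \<Longrightarrow> rn n (\<lambda>xs. LEAST s. a xs < triangle (Suc s))"
proof -
  assume a: "rn n a"
  have "rn n (\<lambda>xs. LEAST y. Suc (a xs) - triangle (Suc y) = 0)"
  proof (rule rn_mu_expr)
    show "rn (Suc n) (\<lambda>ys. Suc (a (tl ys)) - triangle (Suc (ys ! 0)))"
      by (intro rn_intros rn_shift[OF a])
    fix xs :: "nat list"
    have "a xs < triangle (Suc (a xs))" by (induct "a xs") auto
    then show "\<exists>y. Suc (a xs) - triangle (Suc y) = 0" by (intro exI[of _ "a xs"]) simp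
  qed
  moreover have "\<And>xs. (LEAST y. Suc (a xs) - triangle (Suc y) = 0) = (LEAST s. a xs < triangle (Suc s))"
    by (rule arg_cong[where f=Least]) (auto simp: fun_eq_iff)
  ultimately show ?thesis by simp
qed

lemma rn_pdec1[rn_intros]: "rn n a \<Longrightarrow> rn n (\<lambda>xs. fst (prod_decode (a xs)))"
proof -
  assume a: "rn n a"
  have "rn n (\<lambda>xs. a xs - triangle (LEAST s. a xs < triangle (Suc s)))"
    by (intro rn_intros rn_trinv a)
  then show ?thesis by (simp add: prod_decode_alt)
qed

lemma rn_pdec2[rn_intros]: "rn n a \<Longrightarrow> rn n (\<lambda>xs. snd (prod_decode (a xs)))"
proof -
  assume a: "rn n a"
  have "rn n (\<lambda>xs. (LEAST s. a xs < triangle (Suc s)) - (a xs - triangle (LEAST s. a xs < triangle (Suc s))))"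
    by (intro rn_intros rn_trinv a)
  then show ?thesis by (simp add: prod_decode_alt)
qed

definition hdc :: "nat \<Rightarrow> nat" where "hdc c = fst (prod_decode (c - 1))"
definition tlc :: "nat \<Rightarrow> nat" where "tlc c = snd (prod_decode (c - 1))"
definition dropc :: "nat \<Rightarrow> nat \<Rightarrow> nat" where "dropc j c = rec_nat c (\<lambda>k r. tlc r) j"
definition nthc :: "nat \<Rightarrow> nat \<Rightarrow> nat" where "nthc c j = hdc (dropc j c)"
definition lenc :: "nat \<Rightarrow> nat" where "lenc c = (\<Sum>j<c. if dropc j c = 0 then 0 else 1)"

lemma rn_hdc[rn_intros]: "rn n a \<Longrightarrow> rn n (\<lambda>xs. hdc (a xs))"
  unfolding hdc_def by (intro rn_intros)
lemma rn_tlc[rn_intros]: "rn n a \<Longrightarrow> rn n (\<lambda>xs. tlc (a xs))"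
  unfolding tlc_def by (intro rn_intros)
lemma rn_dropc[rn_intros]: "rn n a \<Longrightarrow> rn n b \<Longrightarrow> rn n (\<lambda>xs. dropc (a xs) (b xs))"
  unfolding dropc_def by (intro rn_intros; simp)
lemma rn_nthc[rn_intros]: "rn n a \<Longrightarrow> rn n b \<Longrightarrow> rn n (\<lambda>xs. nthc (a xs) (b xs))"
  unfolding nthc_def by (intro rn_intros)
lemma rn_lenc[rn_intros]: "rn n a \<Longrightarrow> rn n (\<lambda>xs. lenc (a xs))"
  unfolding lenc_def by (intro rn_intros rn_shift[of n a]; simp)

lemma pd0: "prod_decode 0 = (0,0)"
  using prod_encode_inverse[of "(0,0)"] by (simp add: prod_encode_def)

lemma tlc_enc: "tlc (list_encode w) = list_encode (tl w)"
  by (cases w) (auto simp: tlc_def pd0)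

lemma hdc_enc: "w \<noteq> [] \<Longrightarrow> hdc (list_encode w) = hd w"
  by (cases w) (auto simp: hdc_def)

lemma dropc_enc: "dropc j (list_encode w) = list_encode (drop j w)"
  by (induct j) (auto simp: dropc_def tlc_enc drop_Suc tl_drop)

lemma nthc_enc: "j < length w \<Longrightarrow> nthc (list_encode w) j = w ! j"
  by (simp add: nthc_def dropc_enc hdc_enc hd_drop_conv_nth)

lemma length_le_enc: "length w \<le> list_encode w"
proof (induct w)
  case (Cons x xs)
  then show ?case using le_prod_encode_2[of "list_encode xs" x] by simp
qed simp

lemma list_encode_0: "list_encode w = 0 \<longleftrightarrow> w = []"
  by (cases w) auto

lemma lenc_enc: "lenc (list_encode w) = length w"
proof -
  have "lenc (list_encode w) = (\<Sum>j<list_encode w. if j < length w then 1 else 0)"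
    unfolding lenc_def dropc_enc list_encode_0 by (rule sum.cong) auto
  also have "\<dots> = card {j. j < list_encode w \<and> j < length w}"
    by (simp add: sum.If_cases Int_def)
  also have "{j. j < list_encode w \<and> j < length w} = {..<length w}"
    using length_le_enc[of w] by auto
  finally show ?thesis by simp
qed


definition mach :: "(nat \<Rightarrow> nat) \<Rightarrow> (nat \<Rightarrow> nat \<Rightarrow> nat) \<Rightarrow> nat \<Rightarrow> nat" where
  "mach L g c = rec_nat 0 (\<lambda>k r. Suc (prod_encode (g c (L c - Suc k), r))) (L c)"

lemma mach_aux: "k \<le> L c \<Longrightarrow> rec_nat 0 (\<lambda>k r. Suc (prod_encode (g c (L c - Suc k), r))) k
   = list_encode (map (g c) [L c - k..<L c])"
proof (induct k)
  case (Suc k)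
  have "[L c - Suc k..<L c] = (L c - Suc k) # [L c - k..<L c]"
    using Suc.prems by (simp add: upt_conv_Cons Suc_diff_Suc)
  then show ?case using Suc by simp
qed simp

lemma mach_eq: "mach L g c = list_encode (map (g c) [0..<L c])"
  unfolding mach_def using mach_aux[of "L c" L c g] by simp

lemma machine_out_mach: "machine_out (mach L g) w = map (g (list_encode w)) [0..<L (list_encode w)]"
  unfolding machine_out_def mach_eq by simp

lemma rn1_comp: "rn (Suc 0) (\<lambda>xs. L (xs ! 0)) \<Longrightarrow> rn n a \<Longrightarrow> rn n (\<lambda>xs. L (a xs))"
  using rn_comp1[of "\<lambda>xs. L (xs ! 0)" n a] by simp

lemma rn2_comp: "rn (Suc (Suc 0)) (\<lambda>xs. g (xs ! 0) (xs ! 1)) \<Longrightarrow> rn n a \<Longrightarrow> rn n b \<Longrightarrow> rn n (\<lambda>xs. g (a xs) (b xs))"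
  using rn_comp2[of "\<lambda>xs. g (xs ! 0) (xs ! 1)" n a b] by (simp add: numeral_2_eq_2)

lemma total_recursive_mach:
  assumes L: "rn (Suc 0) (\<lambda>xs. L (xs ! 0))" and g: "rn (Suc (Suc 0)) (\<lambda>xs. g (xs ! 0) (xs ! 1))"
  shows "total_recursive (mach L g)"
proof (rule total_recursive_rn)
  show "rn 1 (\<lambda>xs. mach L g (xs ! 0))"
    unfolding mach_def One_nat_def
    by (intro rn_intros rn1_comp[OF L] rn2_comp[OF g]; simp)
qed

definition bc :: "nat \<Rightarrow> nat" where
  "bc x = prod_encode (Suc x, prod_encode (1, 2 ^ (x + 2) - 1))"

definition g1 :: "nat \<Rightarrow> nat \<Rightarrow> nat" where
  "g1 c j = (if nthc c j = 0 then bc (\<Sum>t<j. if nthc c t = 0 then 1 else 0) else 0)"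

definition L1 :: "nat \<Rightarrow> nat" where "L1 c = lenc c - 2"

definition h1 :: "nat \<Rightarrow> nat \<Rightarrow> nat" where
  "h1 c i = (if 1 \<le> nthc c (i + 2) \<and> nthc c (i + 2) \<le> Suc i then 1 else 0)"

definition absd :: "nat \<Rightarrow> nat \<Rightarrow> nat" where "absd a b = (a - b) + (b - a)"

definition inb :: "nat \<Rightarrow> nat \<Rightarrow> nat" where
  "inb b x = (if fst (prod_decode b) = 0
     then (if Suc (snd (prod_decode (snd (prod_decode b)))) < fst (prod_decode (snd (prod_decode b))) * 2 ^ x then 1 else 0)
     else (if absd (2 ^ (fst (prod_decode b) - 1)) (2 ^ x) * Suc (snd (prod_decode (snd (prod_decode b))))
              < fst (prod_decode (snd (prod_decode b))) * 2 ^ (x + (fst (prod_decode b) - 1)) then 1 else 0))"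

definition cov :: "nat \<Rightarrow> nat \<Rightarrow> nat \<Rightarrow> nat" where
  "cov c j x = (if (\<Sum>t<Suc j. inb (nthc c t) x) = 0 then 0 else 1)"

definition zc :: "nat \<Rightarrow> nat \<Rightarrow> nat" where
  "zc c j = rec_nat 0 (\<lambda>k r. r + cov c k r) j"

definition g2 :: "nat \<Rightarrow> nat \<Rightarrow> nat" where
  "g2 c j = 1 - cov c j (zc c j)"

definition h2 :: "nat \<Rightarrow> nat \<Rightarrow> nat" where
  "h2 c i = Suc (\<Sum>t<Suc i. if nthc c t = 0 then 1 else 0)"

lemma rn_bc[rn_intros]: "rn n a \<Longrightarrow> rn n (\<lambda>xs. bc (a xs))"
  unfolding bc_def by (intro rn_intros)

lemma rn_absd[rn_intros]: "rn n a \<Longrightarrow> rn n b \<Longrightarrow> rn n (\<lambda>xs. absd (a xs) (b xs))"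
  unfolding absd_def by (intro rn_intros)

lemma rn_inb[rn_intros]: "rn n a \<Longrightarrow> rn n b \<Longrightarrow> rn n (\<lambda>xs. inb (a xs) (b xs))"
  unfolding inb_def by (intro rn_intros)

lemma rn_cov[rn_intros]: "rn n a \<Longrightarrow> rn n b \<Longrightarrow> rn n c \<Longrightarrow> rn n (\<lambda>xs. cov (a xs) (b xs) (c xs))"
proof -
  assume a: "rn n a" and b: "rn n b" and c: "rn n c"
  show ?thesis unfolding cov_def
    by (intro rn_intros rn_shift[OF a] rn_shift[OF c] b; simp)
qed

lemma rn_zc[rn_intros]: "rn n a \<Longrightarrow> rn n b \<Longrightarrow> rn n (\<lambda>xs. zc (a xs) (b xs))"
proof -
  assume a: "rn n a" and b: "rn n b"
  show ?thesis unfolding zc_def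
    by (intro rn_intros rn_shift2[OF a] b; simp)
qed

lemma tr_K1: "total_recursive (mach lenc g1)"
  unfolding g1_def by (rule total_recursive_mach; (intro rn_intros; simp))

lemma tr_H1: "total_recursive (mach L1 h1)"
  unfolding h1_def L1_def by (rule total_recursive_mach; (intro rn_intros; simp))

lemma tr_K2: "total_recursive (mach lenc g2)"
  unfolding g2_def by (rule total_recursive_mach; (intro rn_intros; simp))

lemma tr_H2: "total_recursive (mach lenc h2)"
  unfolding h2_def by (rule total_recursive_mach; (intro rn_intros; simp))


definition cnt :: "(nat \<Rightarrow> nat) \<Rightarrow> nat \<Rightarrow> nat" where
  "cnt p j = (\<Sum>t<j. if p t = 0 then 1 else 0)"

lemma cnt_card: "cnt p j = card ({i. p i = 0} \<inter> {..<j})"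
  unfolding cnt_def by (simp add: sum.If_cases Int_commute)

lemma cnt_Suc: "cnt p (Suc j) = cnt p j + (if p j = 0 then 1 else 0)"
  unfolding cnt_def by simp

lemma cnt_mono: "j \<le> j' \<Longrightarrow> cnt p j \<le> cnt p j'"
  unfolding cnt_card by (rule card_mono) auto

lemma sort_char: "(Sort_fun p i = 0) \<longleftrightarrow> (\<exists>j. i < cnt p j)"
proof (cases "finite {i. p i = 0}")
  case True
  let ?Z = "{i. p i = 0}"
  have le: "cnt p j \<le> card ?Z" for j
    unfolding cnt_card by (rule card_mono[OF True]) auto
  obtain j0 where "\<forall>z\<in>?Z. z < j0"
    using True finite_nat_set_iff_bounded by blast
  then have "cnt p j0 = card ?Z" unfolding cnt_card by (metis (no_types) Int_absorb2 lessThan_iff subsetI)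
  then have "(\<exists>j. i < cnt p j) \<longleftrightarrow> i < card ?Z"
    using le by (metis less_le_trans)
  then show ?thesis using True unfolding Sort_fun_def by auto
next
  case False
  obtain S where S: "S \<subseteq> {i. p i = 0}" "finite S" "card S = Suc i"
    using infinite_arbitrarily_large[OF False] by blast
  have "S \<noteq> {}" using S by auto
  then have "S \<subseteq> {i. p i = 0} \<inter> {..<Suc (Max S)}" using S by (auto simp: le_imp_less_Suc)
  then have "Suc i \<le> cnt p (Suc (Max S))" unfolding cnt_card using S
    by (metis card_mono finite_Int finite_lessThan)
  then show ?thesis using False unfolding Sort_fun_def by (auto intro!: exI[of _ "Suc (Max S)"])
qed

lemma sort_01: "Sort_fun p i \<le> 1"
  unfolding Sort_fun_def by auto

lemma computes_mach:
  assumes "\<And>m. m - d \<le> L (list_encode (pref p m))"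
    and "\<And>m i. i < L (list_encode (pref p m)) \<Longrightarrow> g (list_encode (pref p m)) i = q i"
  shows "computes (mach L g) p q"
  unfolding computes_def machine_out_mach
proof (intro conjI allI impI)
  fix n
  show "\<exists>m. n < length (map (g (list_encode (pref p m))) [0..<L (list_encode (pref p m))])"
    using assms(1)[of "Suc n + d"] by (intro exI[of _ "Suc n + d"]) simp
next
  fix m i
  assume "i < length (map (g (list_encode (pref p m))) [0..<L (list_encode (pref p m))])"
  then show "map (g (list_encode (pref p m))) [0..<L (list_encode (pref p m))] ! i = q i"
    using assms(2) by simp
qed

lemma length_pref[simp]: "length (pref p m) = m" by (simp add: pref_def)
lemma nth_pref[simp]: "i < m \<Longrightarrow> pref p m ! i = p i" by (simp add: pref_def)

lemma lenc_pref[simp]: "lenc (list_encode (pref p m)) = m"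
  by (simp add: lenc_enc)

lemma nthc_pref[simp]: "i < m \<Longrightarrow> nthc (list_encode (pref p m)) i = p i"
  by (simp add: nthc_enc)


lemma nu_0[simp]: "nu 0 = 0" by (simp add: nu_def)
lemma nu_Suc[simp]: "nu (Suc e) = - ((1/2) ^ e)" by (simp add: nu_def)

lemma omega1_iff: "y \<in> omega1 \<longleftrightarrow> y = 0 \<or> (\<exists>n. y = - ((1/2) ^ n))"
  unfolding omega1_def by auto

lemma nu_omega1: "nu k \<in> omega1"
  by (cases k) (auto simp: omega1_iff)

lemma half_pow_le_iff[simp]: "((1/2::real) ^ m \<le> (1/2) ^ n) \<longleftrightarrow> n \<le> m"
  by (rule power_decreasing_iff) auto

lemma half_pow_less_iff[simp]: "((1/2::real) ^ m < (1/2) ^ n) \<longleftrightarrow> n < m"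
  by (rule power_strict_decreasing_iff) auto

lemma half_pow_eq_iff[simp]: "((1/2::real) ^ m = (1/2) ^ n) \<longleftrightarrow> n = m"
  by (metis half_pow_le_iff order.antisym order_refl)

lemma half_gap:
  assumes "n \<noteq> c"
  shows "(1/2::real) ^ Suc (min n c) \<le> \<bar>(1/2) ^ c - (1/2) ^ n\<bar>"
proof (cases "n < c")
  case True
  then have a: "(1/2::real) ^ c \<le> (1/2) ^ Suc n" by (subst half_pow_le_iff) simp
  have b: "(1/2::real) ^ c \<le> (1/2) ^ n" using True by simp
  have "(1/2::real) ^ Suc n = (1/2) ^ n / 2" by simp
  then show ?thesis using a b True by (simp add: min_def abs_if)
next
  case False
  then have "c < n" using assms by simp
  then have a: "(1/2::real) ^ n \<le> (1/2) ^ Suc c" by (subst half_pow_le_iff) simp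
  have b: "(1/2::real) ^ n \<le> (1/2) ^ c" using \<open>c < n\<close> by simp
  have "(1/2::real) ^ Suc c = (1/2) ^ c / 2" by simp
  then show ?thesis using a b \<open>c < n\<close> by (simp add: min_def abs_if)
qed

lemma least_omega1:
  assumes "A \<subseteq> omega1" "A \<noteq> {}"
  shows "(LEAST x. x \<in> A) = (if \<exists>n. - ((1/2::real) ^ n) \<in> A then - ((1/2) ^ (LEAST n. - ((1/2::real) ^ n) \<in> A)) else 0)"
proof (cases "\<exists>n. - ((1/2::real) ^ n) \<in> A")
  case True
  let ?n = "LEAST n. - ((1/2::real) ^ n) \<in> A"
  have n0: "- ((1/2::real) ^ ?n) \<in> A" using True by (metis (mono_tags, lifting) LeastI)
  have "(LEAST x. x \<in> A) = - ((1/2) ^ ?n)"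
  proof (rule Least_equality[where P="\<lambda>x. x \<in> A", OF n0])
    fix y assume y: "y \<in> A"
    then have "y = 0 \<or> (\<exists>n. y = - ((1/2) ^ n))" using assms(1) omega1_iff by auto
    then show "- ((1/2) ^ ?n) \<le> y"
    proof
      assume "y = 0" then show ?thesis by simp
    next
      assume "\<exists>n. y = - ((1/2) ^ n)"
      then obtain n where n: "y = - ((1/2) ^ n)" by blast
      then have "?n \<le> n" using y by (simp add: Least_le)
      then show ?thesis using n by simp
    qed
  qed
  then show ?thesis using True by simp
next
  case False
  then have "A \<subseteq> {0}" using assms(1) omega1_iff by auto
  then have "A = {0}" using assms(2) by auto
  then show ?thesis using False by (auto intro: Least_equality)
qed

lemma cauchy_lim:
  fixes f :: "nat \<Rightarrow> real"
  assumes c: "\<forall>i j. i \<le> j \<longrightarrow> \<bar>f i - f j\<bar> \<le> (1/2) ^ i"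
  shows "f \<longlonglongrightarrow> lim f" "\<And>i. \<bar>f i - lim f\<bar> \<le> (1/2) ^ i"
proof -
  have "Cauchy f"
  proof (rule CauchyI)
    fix e :: real assume "0 < e"
    then obtain N where N: "(1/2::real) ^ N < e" using real_arch_pow_inv[of e "1/2"] by auto
    show "\<exists>M. \<forall>m\<ge>M. \<forall>n\<ge>M. norm (f m - f n) < e"
    proof (intro exI allI impI)
      fix m n assume "N \<le> m" "N \<le> n"
      have "\<bar>f m - f n\<bar> \<le> (1/2) ^ min m n"
        using c[rule_format, of m n] c[rule_format, of n m] by (cases "m \<le> n") (auto simp: abs_minus_commute min_def)
      also have "\<dots> \<le> (1/2) ^ N" using \<open>N \<le> m\<close> \<open>N \<le> n\<close> by simp
      finally show "norm (f m - f n) < e" using N by simp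
    qed
  qed
  then show lim: "f \<longlonglongrightarrow> lim f" by (simp add: Cauchy_convergent_iff convergent_LIMSEQ_iff)
  fix i
  have "(\<lambda>j. \<bar>f i - f j\<bar>) \<longlonglongrightarrow> \<bar>f i - lim f\<bar>"
    by (intro tendsto_intros lim)
  then show "\<bar>f i - lim f\<bar> \<le> (1/2) ^ i"
    by (rule LIMSEQ_le_const2) (use c in auto)
qed

lemma cauchy_rep_Some:
  assumes "cauchy_rep s = Some y"
  shows "\<And>i. \<bar>nu (s i) - y\<bar> \<le> (1/2) ^ i"
  using assms cauchy_lim[of "\<lambda>i. nu (s i)"] unfolding cauchy_rep_def by (auto split: if_splits)

lemma cauchy_rep_intro:
  assumes "\<forall>i j. i \<le> j \<longrightarrow> \<bar>nu (s i) - nu (s j)\<bar> \<le> (1/2) ^ i" "(\<lambda>i. nu (s i)) \<longlonglongrightarrow> y"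
  shows "cauchy_rep s = Some y"
  using assms limI unfolding cauchy_rep_def by auto


lemma ball_code_0: "ball_code 0 = {}"
  by (simp add: ball_code_def pd0)

lemma ball_code_bc: "ball_code (bc c) = {- ((1/2) ^ c)}"
proof -
  have e: "real (Suc (2 ^ (c + 2) - 1)) = 2 ^ (c + 2)"
    by (simp add: of_nat_diff Suc_diff_1)
  have bc: "ball_code (bc c) = {y \<in> omega1. \<bar>y + (1/2) ^ c\<bar> < (1/2) ^ (c + 2)}"
    unfolding ball_code_def bc_def using e by (simp add: power_one_over)
  show ?thesis unfolding bc
  proof (intro set_eqI iffI)
    fix y assume y: "y \<in> {y \<in> omega1. \<bar>y + (1/2) ^ c\<bar> < (1/2::real) ^ (c + 2)}"
    then have "y = 0 \<or> (\<exists>n. y = - ((1/2) ^ n))" using omega1_iff by auto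
    then show "y \<in> {- ((1/2) ^ c)}"
    proof
      assume "y = 0"
      then show ?thesis using y by (simp del: power_Suc)
    next
      assume "\<exists>n. y = - ((1/2) ^ n)"
      then obtain n where n: "y = - ((1/2) ^ n)" by blast
      show ?thesis
      proof (rule ccontr)
        assume "y \<notin> {- ((1/2) ^ c)}"
        then have "n \<noteq> c" using n by auto
        then have "(1/2::real) ^ Suc (min n c) \<le> \<bar>(1/2) ^ c - (1/2) ^ n\<bar>" by (rule half_gap)
        moreover have "(1/2::real) ^ Suc c \<le> (1/2) ^ Suc (min n c)" by (subst half_pow_le_iff) simp
        moreover have "(1/2::real) ^ (c + 2) < (1/2) ^ Suc c" by (subst half_pow_less_iff) simp
        moreover have "\<bar>(1/2::real) ^ c - (1/2) ^ n\<bar> < (1/2) ^ (c + 2)"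
          using y n by (simp only: mem_Collect_eq) (simp add: abs_minus_commute)
        ultimately show False by linarith
      qed
    qed
  next
    fix y assume "y \<in> {- ((1/2::real) ^ c)}"
    then show "y \<in> {y \<in> omega1. \<bar>y + (1/2) ^ c\<bar> < (1/2::real) ^ (c + 2)}"
      by (auto simp: omega1_iff)
  qed
qed

lemma real_absd: "real (absd a b) = \<bar>real a - real b\<bar>"
  unfolding absd_def by (cases "a \<le> b") (auto simp: of_nat_diff)

lemma div_less_div_iff: "(0::real) < D \<Longrightarrow> 0 < T \<Longrightarrow> (A / D < S / T) = (A * T < S * D)"
  by (simp add: divide_less_eq less_divide_eq field_simps)

lemma inb_iff: "inb b x = (if - ((1/2::real) ^ x) \<in> ball_code b then 1 else 0)"
proof -
  obtain k s t where d: "prod_decode b = (k, prod_encode (s, t))"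
    by (metis prod_decode_inverse surj_pair)
  have pm: "- ((1/2::real) ^ x) \<in> omega1" by (auto simp: omega1_iff)
  have bc: "(- ((1/2::real) ^ x) \<in> ball_code b) \<longleftrightarrow> \<bar>- ((1/2) ^ x) - nu k\<bar> < real s / real (Suc t)"
    unfolding ball_code_def d using pm by simp
  have pos: "(0::real) < 2 ^ x" "(0::real) < real (Suc t)" by auto
  show ?thesis
  proof (cases k)
    case 0
    have "(\<bar>- ((1/2::real) ^ x) - nu k\<bar> < real s / real (Suc t)) \<longleftrightarrow> real (Suc t) < real s * 2 ^ x"
      using 0 pos by (simp add: power_one_over field_simps del: of_nat_Suc)
    also have "\<dots> \<longleftrightarrow> Suc t < s * 2 ^ x" by (metis of_nat_less_iff of_nat_mult of_nat_numeral of_nat_power)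
    finally show ?thesis using 0 bc by (simp add: inb_def d)
  next
    case (Suc e)
    have "\<bar>- ((1/2::real) ^ x) - nu k\<bar> = \<bar>real (2 ^ e) - real (2 ^ x)\<bar> / 2 ^ (x + e)"
      using Suc by (simp add: power_one_over power_add field_simps abs_if)
    also have "\<dots> = real (absd (2 ^ e) (2 ^ x)) / 2 ^ (x + e)" by (simp only: real_absd)
    finally have "(\<bar>- ((1/2::real) ^ x) - nu k\<bar> < real s / real (Suc t)) \<longleftrightarrow>
        real (absd (2 ^ e) (2 ^ x)) * real (Suc t) < real s * 2 ^ (x + e)"
      by (simp only: div_less_div_iff[OF _ pos(2)] zero_less_power zero_less_numeral)
    also have "\<dots> \<longleftrightarrow> absd (2 ^ e) (2 ^ x) * Suc t < s * 2 ^ (x + e)"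
      by (metis of_nat_less_iff of_nat_mult of_nat_numeral of_nat_power)
    finally show ?thesis using Suc bc by (simp add: inb_def d)
  qed
qed


lemma cnt_0[simp]: "cnt p 0 = 0" by (simp add: cnt_def)

lemma cnt_hit: "(\<exists>j. p j = 0 \<and> cnt p j = c) \<longleftrightarrow> (\<exists>j. c < cnt p j)"
proof
  assume "\<exists>j. p j = 0 \<and> cnt p j = c"
  then obtain j where "p j = 0" "cnt p j = c" by blast
  then show "\<exists>j. c < cnt p j" by (intro exI[of _ "Suc j"]) (simp add: cnt_Suc)
next
  assume "\<exists>j. c < cnt p j"
  then obtain j where j: "c < cnt p j" by blast
  let ?j = "LEAST j. c < cnt p j"
  have j1: "c < cnt p ?j" using j by (metis (mono_tags, lifting) LeastI)
  then have "?j \<noteq> 0" by (metis cnt_0 not_less0)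
  then obtain j' where j': "?j = Suc j'" by (metis not0_implies_Suc)
  have "\<not> c < cnt p j'" by (rule not_less_Least) (simp add: j')
  then show "\<exists>j. p j = 0 \<and> cnt p j = c" using j1 j' by (intro exI[of _ j']) (auto simp: cnt_Suc split: if_splits)
qed

lemma H1_key:
  fixes y :: real
  assumes dc: "\<And>i i'. i' \<le> i \<Longrightarrow> D i \<Longrightarrow> D i'"
    and y: "y = (if \<exists>n. \<not> D n then - ((1/2) ^ (LEAST n. \<not> D n)) else 0)"
    and k: "\<bar>nu k - y\<bar> \<le> (1/2) ^ (i + 2)"
  shows "(1 \<le> k \<and> k \<le> Suc i) \<longleftrightarrow> \<not> D i"
proof -
  have lt: "(1/2::real) ^ (i + 2) < (1/2) ^ Suc i" by (subst half_pow_less_iff) simp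
  have lt2: "(1/2::real) ^ (i + 2) < (1/2) ^ i" by (subst half_pow_less_iff) simp
  show ?thesis
  proof (cases "D i")
    case True
    have ycase: "y = 0 \<or> (\<exists>n0. i < n0 \<and> y = - ((1/2) ^ n0))"
    proof (cases "\<exists>n. \<not> D n")
      case True2: True
      let ?n = "LEAST n. \<not> D n"
      have "\<not> D ?n" using True2 by (metis (mono_tags, lifting) LeastI)
      then have "i < ?n" using dc True by (meson not_le)
      then show ?thesis using y True2 by auto
    qed (use y in auto)
    have "\<not> (1 \<le> k \<and> k \<le> Suc i)"
    proof
      assume "1 \<le> k \<and> k \<le> Suc i"
      then obtain e where e: "k = Suc e" "e \<le> i" by (metis Suc_le_D Suc_le_mono One_nat_def)
      have he: "(1/2::real) ^ Suc i \<le> (1/2) ^ Suc e" "(1/2::real) ^ i \<le> (1/2) ^ e"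
        using e by (subst half_pow_le_iff; simp)+
      from ycase show False
      proof
        assume "y = 0"
        then have "\<bar>nu k - y\<bar> = (1/2) ^ e" using e by simp
        then show False using k he lt2 by linarith
      next
        assume "\<exists>n0. i < n0 \<and> y = - ((1/2) ^ n0)"
        then obtain n0 where n0: "i < n0" "y = - ((1/2) ^ n0)" by blast
        then have "n0 \<noteq> e" using e by simp
        then have g: "(1/2::real) ^ Suc (min n0 e) \<le> \<bar>(1/2) ^ e - (1/2) ^ n0\<bar>" by (rule half_gap)
        have m: "min n0 e = e" using n0 e by simp
        have g': "(1/2::real) ^ Suc e \<le> \<bar>(1/2) ^ e - (1/2) ^ n0\<bar>" using g by (simp only: m)
        have "\<bar>nu k - y\<bar> = \<bar>(1/2) ^ e - (1/2) ^ n0\<bar>" using e n0 by (simp add: abs_minus_commute)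
        then show False using g' k he lt by linarith
      qed
    qed
    then show ?thesis using True by simp
  next
    case False
    then have ex: "\<exists>n. \<not> D n" by blast
    let ?n = "LEAST n. \<not> D n"
    have n_le: "?n \<le> i" using False by (meson Least_le)
    have yv: "y = - ((1/2) ^ ?n)" using y ex by simp
    have hn: "(1/2::real) ^ Suc i \<le> (1/2) ^ Suc ?n" "(1/2::real) ^ i \<le> (1/2) ^ ?n"
      using n_le by (subst half_pow_le_iff; simp)+
    have "1 \<le> k \<and> k \<le> Suc i"
    proof (rule ccontr)
      assume nk: "\<not> (1 \<le> k \<and> k \<le> Suc i)"
      show False
      proof (cases k)
        case 0
        then have "\<bar>nu k - y\<bar> = (1/2) ^ ?n" using yv by simp
        then show False using k hn lt2 by linarith
      next
        case (Suc e)
        then have "i < e" using nk by simp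
        then have "?n \<noteq> e" using n_le by simp
        then have g: "(1/2::real) ^ Suc (min ?n e) \<le> \<bar>(1/2) ^ e - (1/2) ^ ?n\<bar>" by (rule half_gap)
        have m: "min ?n e = ?n" using n_le \<open>i < e\<close> by simp
        have g': "(1/2::real) ^ Suc ?n \<le> \<bar>(1/2) ^ e - (1/2) ^ ?n\<bar>" using g by (simp only: m)
        have "\<bar>nu k - y\<bar> = \<bar>(1/2) ^ e - (1/2) ^ ?n\<bar>" using Suc yv by (simp add: abs_minus_commute)
        then show False using g' k hn lt by linarith
      qed
    qed
    then show ?thesis using False by simp
  qed
qed


definition Q1 :: "(nat \<Rightarrow> nat) \<Rightarrow> nat \<Rightarrow> nat" where
  "Q1 p j = (if p j = 0 then bc (cnt p j) else 0)"

definition R1 :: "(nat \<Rightarrow> nat) \<Rightarrow> nat \<Rightarrow> nat" where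
  "R1 s i = (if 1 \<le> s (i + 2) \<and> s (i + 2) \<le> Suc i then 1 else 0)"

lemma g1_pref: "i < m \<Longrightarrow> g1 (list_encode (pref p m)) i = Q1 p i"
  unfolding g1_def Q1_def cnt_def by (auto intro!: sum.cong)

lemma h1_pref: "i < L1 (list_encode (pref s m)) \<Longrightarrow> h1 (list_encode (pref s m)) i = R1 s i"
  unfolding h1_def R1_def L1_def by simp

lemma ball_Q1: "ball_code (Q1 p i) = (if p i = 0 then {- ((1/2) ^ cnt p i)} else {})"
  unfolding Q1_def by (simp add: ball_code_bc ball_code_0)

lemma sW_le1: "sW_le Sort_problem min_problem"
  unfolding sW_le_def
proof (rule exI[of _ "mach lenc g1"], rule exI[of _ "mach L1 h1"], intro conjI allI impI)
  show "total_recursive (mach lenc g1)" by (rule tr_K1)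
  show "total_recursive (mach L1 h1)" by (rule tr_H1)
  fix G p x
  assume G: "realizer min_problem G"
    and px: "in_rep Sort_problem p = Some x" and xd: "x \<in> pdom Sort_problem"
  have x: "x = p" using px by (simp add: Sort_problem_def cantor_rep_def split: if_splits)
  let ?q = "Q1 p"
  let ?A = "omega1 - (\<Union>i. ball_code (?q i))"
  let ?D = "\<lambda>n. \<exists>j. n < cnt p j"
  have ptA: "- ((1/2) ^ n) \<in> ?A \<longleftrightarrow> \<not> ?D n" for n
  proof -
    have "- ((1/2::real) ^ n) \<in> (\<Union>i. ball_code (?q i)) \<longleftrightarrow> (\<exists>j. p j = 0 \<and> cnt p j = n)"
      by (auto simp: ball_Q1 split: if_splits)
    then show ?thesis using cnt_hit[of p n] by (auto simp: omega1_iff)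
  qed
  have zA: "0 \<in> ?A" by (auto simp: omega1_iff ball_Q1 split: if_splits)
  have "in_rep min_problem ?q = Some ?A" by (simp add: min_problem_def closed_neg_rep_def)
  moreover have "?A \<in> pdom min_problem" using zA by (auto simp: min_problem_def)
  ultimately obtain y where y: "cauchy_rep (G ?q) = Some y" "y = (LEAST x. x \<in> ?A)"
    using G unfolding realizer_def by (auto simp: min_problem_def)
  have yv: "y = (if \<exists>n. \<not> ?D n then - ((1/2) ^ (LEAST n. \<not> ?D n)) else 0)"
  proof -
    have l: "(LEAST x. x \<in> ?A) = (if \<exists>n. - ((1/2::real) ^ n) \<in> ?A then - ((1/2) ^ (LEAST n. - ((1/2::real) ^ n) \<in> ?A)) else 0)"
      by (rule least_omega1) (use zA in auto)
    show ?thesis unfolding y(2) l ptA ..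
  qed
  let ?s = "G ?q"
  have close: "\<bar>nu (?s j) - y\<bar> \<le> (1/2) ^ j" for j using cauchy_rep_Some[OF y(1)] .
  have rs: "R1 ?s = Sort_fun p"
  proof
    fix i
    have dc: "\<And>i i'. i' \<le> i \<Longrightarrow> ?D i \<Longrightarrow> ?D i'" by (meson le_less_trans)
    have "(1 \<le> ?s (i+2) \<and> ?s (i+2) \<le> Suc i) \<longleftrightarrow> \<not> ?D i"
      by (rule H1_key[OF dc yv close])
    then show "R1 ?s i = Sort_fun p i"
      using sort_char[of p i] sort_01[of p i] unfolding R1_def by auto
  qed
  show "\<exists>q r y. computes (mach lenc g1) p q \<and> computes (mach L1 h1) (G q) r \<and>
          out_rep Sort_problem r = Some y \<and> y \<in> pmap Sort_problem x"
  proof (intro exI conjI)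
    show "computes (mach lenc g1) p ?q"
      by (rule computes_mach[where d=0]) (auto simp: g1_pref)
    show "computes (mach L1 h1) (G ?q) (R1 ?s)"
      by (rule computes_mach[where d=2]) (auto simp: h1_pref L1_def)
    show "out_rep Sort_problem (R1 ?s) = Some (Sort_fun p)"
      using rs sort_01 by (simp add: Sort_problem_def cantor_rep_def)
    show "Sort_fun p \<in> pmap Sort_problem x" using x by (simp add: Sort_problem_def)
  qed
qed


definition covp :: "(nat \<Rightarrow> nat) \<Rightarrow> nat \<Rightarrow> nat \<Rightarrow> nat" where
  "covp p j x = (if (\<Sum>t<Suc j. inb (p t) x) = 0 then 0 else 1)"

definition zp :: "(nat \<Rightarrow> nat) \<Rightarrow> nat \<Rightarrow> nat" where
  "zp p j = rec_nat 0 (\<lambda>k r. r + covp p k r) j"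

definition Q2 :: "(nat \<Rightarrow> nat) \<Rightarrow> nat \<Rightarrow> nat" where
  "Q2 p j = 1 - covp p j (zp p j)"

definition R2 :: "(nat \<Rightarrow> nat) \<Rightarrow> nat \<Rightarrow> nat" where
  "R2 s i = Suc (cnt s (Suc i))"

lemma cov_pref: "j < m \<Longrightarrow> cov (list_encode (pref p m)) j x = covp p j x"
  unfolding cov_def covp_def by (auto intro!: sum.cong)

lemma zc_pref: "j \<le> m \<Longrightarrow> zc (list_encode (pref p m)) j = zp p j"
  by (induct j) (auto simp: zc_def zp_def cov_pref)

lemma g2_pref: "j < m \<Longrightarrow> g2 (list_encode (pref p m)) j = Q2 p j"
  unfolding g2_def Q2_def by (simp add: cov_pref zc_pref)

lemma h2_pref: "i < m \<Longrightarrow> h2 (list_encode (pref s m)) i = R2 s i"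
  unfolding h2_def R2_def cnt_def by (auto intro!: sum.cong)

definition covered :: "(nat \<Rightarrow> nat) \<Rightarrow> nat \<Rightarrow> bool" where
  "covered p x \<longleftrightarrow> (\<exists>t. - ((1/2::real) ^ x) \<in> ball_code (p t))"

lemma covp_iff: "covp p j x = (if \<exists>t\<le>j. - ((1/2::real) ^ x) \<in> ball_code (p t) then 1 else 0)"
  unfolding covp_def inb_iff by (auto simp: less_Suc_eq_le) (metis le_neq_implies_less lessThan_iff)

lemma zp_Suc: "zp p (Suc j) = zp p j + covp p j (zp p j)"
  by (simp add: zp_def)

lemma zp_0[simp]: "zp p 0 = 0" by (simp add: zp_def)

lemma Q2_01: "Q2 p j \<le> 1" unfolding Q2_def by simp

lemma Q2_0: "Q2 p j = 0 \<longleftrightarrow> covp p j (zp p j) = 1"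
  unfolding Q2_def by (simp add: covp_iff)

lemma zp_cnt: "zp p j = cnt (Q2 p) j"
  by (induct j) (auto simp: zp_Suc cnt_Suc Q2_0 covp_iff)

lemma zp_mono: "j \<le> j' \<Longrightarrow> zp p j \<le> zp p j'"
  by (induct j' rule: dec_induct) (auto simp: zp_Suc)

lemma zp_covered: "x < zp p j \<Longrightarrow> covered p x"
proof (induct j)
  case (Suc j)
  show ?case
  proof (cases "x < zp p j")
    case True then show ?thesis using Suc by simp
  next
    case False
    then have "x = zp p j" "covp p j (zp p j) = 1" using Suc.prems
      by (auto simp: zp_Suc covp_iff split: if_splits)
    then show ?thesis unfolding covered_def by (auto simp: covp_iff split: if_splits)
  qed
qed simp

lemma covered_zp: "(\<forall>x<n. covered p x) \<Longrightarrow> \<exists>j. n \<le> zp p j"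
proof (induct n)
  case (Suc n)
  then obtain j where j: "n \<le> zp p j" by auto
  show ?case
  proof (cases "n < zp p j")
    case True then show ?thesis by (auto intro!: exI[of _ j])
  next
    case False
    then have jn: "zp p j = n" using j by simp
    have "covered p n" using Suc.prems by simp
    then obtain t where t: "- ((1/2::real) ^ n) \<in> ball_code (p t)" unfolding covered_def by blast
    let ?j = "max j t"
    have "n \<le> zp p ?j" using j zp_mono[of j ?j p] by simp
    show ?thesis
    proof (cases "n < zp p ?j")
      case True then show ?thesis by (auto intro!: exI[of _ ?j])
    next
      case False
      then have e: "zp p ?j = n" using \<open>n \<le> zp p ?j\<close> by simp
      have "covp p ?j n = 1" using t by (auto simp: covp_iff intro!: exI[of _ t])
      then have "zp p (Suc ?j) = Suc n" using e by (simp add: zp_Suc)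
      then show ?thesis by (intro exI[of _ "Suc ?j"]) simp
    qed
  qed
qed simp

lemma D2_char: "(\<exists>j. i < zp p j) \<longleftrightarrow> (\<forall>x\<le>i. covered p x)"
proof
  assume "\<exists>j. i < zp p j"
  then show "\<forall>x\<le>i. covered p x" using zp_covered by (meson le_less_trans)
next
  assume "\<forall>x\<le>i. covered p x"
  then have "\<forall>x<Suc i. covered p x" by (simp add: less_Suc_eq_le)
  from covered_zp[OF this] show "\<exists>j. i < zp p j" by (meson Suc_le_lessD)
qed


lemma half_close: "Suc i \<le> a \<Longrightarrow> a \<le> b \<Longrightarrow> \<bar>(1/2::real) ^ a - (1/2) ^ b\<bar> \<le> (1/2) ^ i"
proof -
  assume "Suc i \<le> a" "a \<le> b"
  have h1: "(1/2::real) ^ b \<le> (1/2) ^ a" using \<open>a \<le> b\<close> by (subst half_pow_le_iff) simp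
  have h2: "(1/2::real) ^ a \<le> (1/2) ^ i" using \<open>Suc i \<le> a\<close> by (subst half_pow_le_iff) simp
  have h3: "0 < (1/2::real) ^ b" by simp
  show ?thesis using h1 h2 h3 by linarith
qed

lemma seq_min:
  fixes N :: nat
  shows "\<forall>i j. i \<le> j \<longrightarrow> \<bar>- ((1/2::real) ^ min (Suc i) N) - - ((1/2) ^ min (Suc j) N)\<bar> \<le> (1/2) ^ i"
    "(\<lambda>i. - ((1/2::real) ^ min (Suc i) N)) \<longlonglongrightarrow> - ((1/2) ^ N)"
proof -
  show "\<forall>i j. i \<le> j \<longrightarrow> \<bar>- ((1/2::real) ^ min (Suc i) N) - - ((1/2) ^ min (Suc j) N)\<bar> \<le> (1/2) ^ i"
  proof (intro allI impI)
    fix i j :: nat assume ij: "i \<le> j"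
    show "\<bar>- ((1/2::real) ^ min (Suc i) N) - - ((1/2) ^ min (Suc j) N)\<bar> \<le> (1/2) ^ i"
    proof (cases "N \<le> Suc i")
      case True
      then have "min (Suc i) N = N" "min (Suc j) N = N" using ij by auto
      then show ?thesis by simp
    next
      case False
      then have "min (Suc i) N = Suc i" "Suc i \<le> min (Suc j) N" using ij by auto
      then show ?thesis using half_close[of i "Suc i" "min (Suc j) N"] by (simp add: abs_minus_commute)
    qed
  qed
  have "eventually (\<lambda>i. - ((1/2::real) ^ min (Suc i) N) = - ((1/2) ^ N)) sequentially"
    unfolding eventually_sequentially by (intro exI[of _ N]) (auto simp: min_def)
  then show "(\<lambda>i. - ((1/2::real) ^ min (Suc i) N)) \<longlonglongrightarrow> - ((1/2) ^ N)"
    by (rule tendsto_eventually)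
qed

lemma seq_inf:
  shows "\<forall>i j. i \<le> j \<longrightarrow> \<bar>- ((1/2::real) ^ Suc i) - - ((1/2) ^ Suc j)\<bar> \<le> (1/2) ^ i"
    "(\<lambda>i. - ((1/2::real) ^ Suc i)) \<longlonglongrightarrow> 0"
proof -
  show "\<forall>i j. i \<le> j \<longrightarrow> \<bar>- ((1/2::real) ^ Suc i) - - ((1/2) ^ Suc j)\<bar> \<le> (1/2) ^ i"
    using half_close[of _ "Suc _" "Suc _"] by (auto simp: abs_minus_commute simp del: power_Suc)
  have "(\<lambda>i. (1/2::real) ^ Suc i) \<longlonglongrightarrow> 0"
    using LIMSEQ_Suc[OF LIMSEQ_power_zero[of "1/2::real"]] by simp
  then show "(\<lambda>i. - ((1/2::real) ^ Suc i)) \<longlonglongrightarrow> 0"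
    using tendsto_minus[of "\<lambda>i. (1/2::real) ^ Suc i" 0] by simp
qed

lemma R2_cnt:
  assumes hs: "\<And>t. (s t = 0) \<longleftrightarrow> (\<forall>x\<le>t. C x)"
  shows "cnt s (Suc i) = (if \<exists>n. \<not> C n then min (Suc i) (LEAST n. \<not> C n) else Suc i)"
proof (cases "\<exists>n. \<not> C n")
  case True
  let ?n = "LEAST n. \<not> C n"
  have "(\<forall>x\<le>t. C x) \<longleftrightarrow> t < ?n" for t
  proof
    assume "\<forall>x\<le>t. C x"
    then show "t < ?n" using True by (metis (mono_tags, lifting) LeastI not_le)
  next
    assume "t < ?n"
    then show "\<forall>x\<le>t. C x" using not_less_Least by (metis le_less_trans)
  qed
  then have "{i. s i = 0} \<inter> {..<Suc i} = {..<min (Suc i) ?n}" using hs by auto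
  then show ?thesis using True by (simp add: cnt_card)
next
  case False
  then have "{i. s i = 0} \<inter> {..<Suc i} = {..<Suc i}" using hs by auto
  then show ?thesis using False by (simp add: cnt_card)
qed

lemma R2_cauchy:
  assumes hs: "\<And>t. (s t = 0) \<longleftrightarrow> (\<forall>x\<le>t. C x)"
  shows "cauchy_rep (R2 s) = Some (if \<exists>n. \<not> C n then - ((1/2) ^ (LEAST n. \<not> C n)) else 0)"
proof (cases "\<exists>n. \<not> C n")
  case True
  have e: "nu (R2 s i) = - ((1/2) ^ min (Suc i) (LEAST n. \<not> C n))" for i
    using R2_cnt[OF hs, of i] True by (simp add: R2_def)
  show ?thesis using True seq_min[of "LEAST n. \<not> C n"]
    by (intro cauchy_rep_intro) (simp_all add: e)
next
  case False
  have e: "nu (R2 s i) = - ((1/2) ^ Suc i)" for i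
    using R2_cnt[OF hs, of i] False by (simp add: R2_def del: power_Suc)
  show ?thesis using False seq_inf
    by (intro cauchy_rep_intro) (simp_all add: e del: power_Suc)
qed

lemma sW_le2: "sW_le min_problem Sort_problem"
  unfolding sW_le_def
proof (rule exI[of _ "mach lenc g2"], rule exI[of _ "mach lenc h2"], intro conjI allI impI)
  show "total_recursive (mach lenc g2)" by (rule tr_K2)
  show "total_recursive (mach lenc h2)" by (rule tr_H2)
  fix G p A
  assume G: "realizer Sort_problem G"
    and pA: "in_rep min_problem p = Some A" and Ad: "A \<in> pdom min_problem"
  have A: "A = omega1 - (\<Union>i. ball_code (p i))" using pA by (simp add: min_problem_def closed_neg_rep_def)
  have Ane: "A \<noteq> {}" using Ad by (simp add: min_problem_def)
  let ?q = "Q2 p"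
  have "in_rep Sort_problem ?q = Some ?q" using Q2_01 by (simp add: Sort_problem_def cantor_rep_def)
  moreover have "?q \<in> pdom Sort_problem" using Q2_01 by (simp add: Sort_problem_def)
  ultimately obtain y' where y': "cantor_rep (G ?q) = Some y'" "y' = Sort_fun ?q"
    using G unfolding realizer_def by (auto simp: Sort_problem_def)
  let ?s = "G ?q"
  have s: "?s = Sort_fun ?q" using y' by (simp add: cantor_rep_def split: if_splits)
  have hs: "(?s t = 0) \<longleftrightarrow> (\<forall>x\<le>t. covered p x)" for t
    unfolding s sort_char zp_cnt[symmetric] D2_char ..
  have ptA: "- ((1/2) ^ n) \<in> A \<longleftrightarrow> \<not> covered p n" for n
    unfolding A covered_def by (auto simp: omega1_iff)
  have l: "(LEAST x. x \<in> A) = (if \<exists>n. - ((1/2::real) ^ n) \<in> A then - ((1/2) ^ (LEAST n. - ((1/2::real) ^ n) \<in> A)) else 0)"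
    by (rule least_omega1) (use A Ane in auto)
  have cr: "cauchy_rep (R2 ?s) = Some (LEAST x. x \<in> A)"
    unfolding l ptA by (rule R2_cauchy[OF hs])
  show "\<exists>q r y. computes (mach lenc g2) p q \<and> computes (mach lenc h2) (G q) r \<and>
          out_rep min_problem r = Some y \<and> y \<in> pmap min_problem A"
  proof (intro exI conjI)
    show "computes (mach lenc g2) p ?q"
      by (rule computes_mach[where d=0]) (auto simp: g2_pref)
    show "computes (mach lenc h2) (G ?q) (R2 ?s)"
      by (rule computes_mach[where d=0]) (auto simp: h2_pref)
    show "out_rep min_problem (R2 ?s) = Some (LEAST x. x \<in> A)"
      using cr by (simp add: min_problem_def)
    show "(LEAST x. x \<in> A) \<in> pmap min_problem A" by (simp add: min_problem_def)
  qed
qed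

theorem proposition3p1:
  shows "sW_equiv Sort_problem min_problem"
  unfolding sW_equiv_def using sW_le1 sW_le2 by blast

end
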